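(* Let $p\ge1$ and $q\ge2$ be integers and $m=p+q-1$. For integers $r\ge1$ and $s$ put $F_r(s)=\binom{2r-s-1}{r-1}$. Then for every $j\in[1,m]$, \[ \binom{2m-j-1}{m-1}=A(j)+B(j)+C(j), \] where \[ A(j)=\sum_{\substack{s\in[1,p],\ t\in[1,q-1]\\ s+t=j}}F_p(s)F_{q-1}(t),\qquad B(j)=\sum_{s=j}^{p}\sum_{t=1}^{q-1}F_p(s)F_{q-1}(t)\binom{s+t-j-1}{s-j}, \] \[ C(j)=\sum_{s=1}^{p}\sum_{t=j}^{q-1}F_p(s)F_{q-1}(t)\binom{s+t-j-1}{s-1} \] (empty sums are $0$).
   Context: $[1,n]=\{1,\dots,n\}$; binomial coefficients are the usual ones for non-negative arguments. *)

theory Defs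
  imports Main
begin

text \<open>F r s = binom(2r - s - 1, r - 1). Used only for 1 <= s <= r, where all
  arguments are genuinely non-negative, so natural-number subtraction is exact.\<close>
definition F :: "nat \<Rightarrow> nat \<Rightarrow> nat" where
  "F r s = (2 * r - s - 1) choose (r - 1)"

end

theory Submission
  imports Defs
begin

lemma V: "(\<Sum>k\<le>N. (k choose a) * ((N - k) choose b)) = Suc N choose Suc (a + b)"
proof (induction N arbitrary: b)
  case 0
  then show ?case by (cases a; cases b; simp)
next
  case (Suc N)
  show ?case
  proof (cases b)
    case 0
    then show ?thesis using sum_choose_upper[of a "Suc N"] by simp
  next
    case (Suc b')
    have "(\<Sum>k\<le>Suc N. (k choose a) * ((Suc N - k) choose b))
        = (\<Sum>k\<le>N. (k choose a) * ((Suc N - k) choose b))"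
      using Suc by simp
    also have "\<dots> = (\<Sum>k\<le>N. (k choose a) * ((N - k) choose b') + (k choose a) * ((N - k) choose b))"
      by (rule sum.cong) (auto simp: Suc Suc_diff_le algebra_simps)
    also have "\<dots> = (Suc N choose Suc (a + b')) + (Suc N choose Suc (a + b))"
      by (simp add: sum.distrib Suc.IH)
    also have "\<dots> = Suc (Suc N) choose Suc (a + b)" using Suc by simp
    finally show ?thesis .
  qed
qed

lemma V': "(\<Sum>i\<le>L. ((a+i) choose a) * ((b + (L - i)) choose b)) = (a+b+L+1) choose L"
proof -
  define N where "N = a + b + L"
  have "(\<Sum>k\<le>N. (k choose a) * ((N - k) choose b)) = (\<Sum>k\<in>{a..a+L}. (k choose a) * ((N - k) choose b))"
    by (rule sum.mono_neutral_right) (auto simp: N_def binomial_eq_0)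
  also have "\<dots> = (\<Sum>i\<le>L. ((a+i) choose a) * ((b + (L - i)) choose b))"
  proof -
    have "{a..a+L} = (\<lambda>i. a + i) ` {..L}"
      apply (auto simp: image_iff) by (metis add.commute atMost_iff le_add_diff_inverse le_diff_conv)
    then show ?thesis
      by (simp add: sum.reindex N_def)
  qed
  finally have "(\<Sum>i\<le>L. ((a+i) choose a) * ((b + (L - i)) choose b)) = Suc N choose Suc (a+b)"
    using V[where N=N and a=a and b=b] by (simp only:)
  also have "\<dots> = Suc N choose L"
    by (subst binomial_symmetric) (auto simp: N_def)
  finally show ?thesis by (simp add: N_def)
qed

lemma shift1: "1 \<le> n \<Longrightarrow> sum f {1..n} = (\<Sum>i\<le>n-1. f (Suc i))"
proof -
  assume "1 \<le> n"
  then have "{1..n} = {Suc 0..Suc (n-1)}" by simp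
  then show ?thesis by (simp only: sum.shift_bounds_cl_Suc_ivl atLeast0AtMost)
qed
lemma chsym: "(a+i) choose i = (a+i) choose a"
  using binomial_symmetric[of i "a+i"] by simp

theorem lemma5:
  fixes p q m j :: nat
  assumes "p \<ge> 1" and "q \<ge> 2" and "m = p + q - 1"
    and "j \<in> {1..m}"
  shows "(2 * m - j - 1) choose (m - 1) =
      (\<Sum>(s, t) \<in> {(s, t). s \<in> {1..p} \<and> t \<in> {1..q - 1} \<and> s + t = j}.
          F p s * F (q - 1) t)
    + (\<Sum>s = j..p. \<Sum>t = 1..q - 1. F p s * F (q - 1) t * ((s + t - j - 1) choose (s - j)))
    + (\<Sum>s = 1..p. \<Sum>t = j..q - 1. F p s * F (q - 1) t * ((s + t - j - 1) choose (s - 1)))"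
proof -
  define n where "n = q - 1"
  have n1: "n \<ge> 1" and mpn: "m = p + n" using assms by (auto simp: n_def)
  have j1: "1 \<le> j" and jm: "j \<le> m" using assms(4) by auto
  define L where "L = m - j"
  define g where "g i = ((p-1+i) choose (p-1)) * ((n-1+(L-i)) choose (n-1))" for i
  have Fp: "F p s = (p-1+(p-s)) choose (p-1)" if "1 \<le> s" "s \<le> p" for s
    unfolding F_def using that by (intro arg_cong2[where f="(choose)"]) auto
  have Fn: "F n t = (n-1+(n-t)) choose (n-1)" if "1 \<le> t" "t \<le> n" for t
    unfolding F_def using that by (intro arg_cong2[where f="(choose)"]) auto
  have LHS: "(2 * m - j - 1) choose (m - 1) = (\<Sum>i\<le>L. g i)"
  proof -
    have "(\<Sum>i\<le>L. g i) = (p-1+(n-1)+L+1) choose L"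
      unfolding g_def by (rule V')
    also have "p-1+(n-1)+L+1 = 2*m-j-1" using assms(1) n1 jm j1 mpn unfolding L_def by linarith
    also have "(2*m-j-1) choose L = (2*m-j-1) choose (m-1)"
      by (subst binomial_symmetric[of "m-1"]) (use jm j1 n1 mpn in \<open>auto simp: L_def add.commute\<close>)
    finally show ?thesis by simp
  qed
  define P1 where "P1 = {..L} \<inter> {i. i + j \<le> p}"
  define P2 where "P2 = {..L} \<inter> {i. p < i + j \<and> i < p}"
  define P3 where "P3 = {..L} \<inter> {i. p \<le> i}"
  have split: "(\<Sum>i\<le>L. g i) = sum g P1 + sum g P2 + sum g P3"
  proof -
    have "{..L} = (P1 \<union> P2) \<union> P3" by (auto simp: P1_def P2_def P3_def)
    moreover have "sum g ((P1 \<union> P2) \<union> P3) = sum g P1 + sum g P2 + sum g P3"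
      by (subst sum.union_disjoint; (subst sum.union_disjoint)?) (use j1 in \<open>auto simp: P1_def P2_def P3_def\<close>)
    ultimately show ?thesis by simp
  qed
  have B: "(\<Sum>s = j..p. \<Sum>t = 1..q - 1. F p s * F (q - 1) t * ((s + t - j - 1) choose (s - j))) = sum g P1"
  proof -
    have inner: "(\<Sum>t = 1..n. F p s * F n t * ((s + t - j - 1) choose (s - j))) = g (p - s)"
      if s: "j \<le> s" "s \<le> p" for s
    proof -
      have "(\<Sum>t = 1..n. F n t * ((s + t - j - 1) choose (s - j)))
          = (\<Sum>i\<le>n-1. ((s-j+i) choose (s-j)) * ((n-1+(n-1-i)) choose (n-1)))"
      proof -
        have "(\<Sum>t = 1..n. F n t * ((s + t - j - 1) choose (s - j)))
            = (\<Sum>i\<le>n-1. F n (Suc i) * ((s + Suc i - j - 1) choose (s - j)))"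
          by (rule shift1[OF n1])
        also have "\<dots> = (\<Sum>i\<le>n-1. ((s-j+i) choose (s-j)) * ((n-1+(n-1-i)) choose (n-1)))"
        proof (rule sum.cong[OF refl])
          fix i assume i: "i \<in> {..n-1}"
          have "F n (Suc i) = (n-1+(n-1-i)) choose (n-1)" using i n1 by (subst Fn) auto
          moreover have "s + Suc i - j - 1 = s-j+i" using s by simp
          ultimately show "F n (Suc i) * ((s + Suc i - j - 1) choose (s - j)) = ((s-j+i) choose (s-j)) * ((n-1+(n-1-i)) choose (n-1))"
            by simp
        qed
        finally show ?thesis .
      qed
      also have "\<dots> = (s-j+(n-1)+(n-1)+1) choose (n-1)" by (rule V')
      finally have e: "(\<Sum>t = 1..n. F n t * ((s + t - j - 1) choose (s - j))) = (s-j+(n-1)+(n-1)+1) choose (n-1)" .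
      have "(\<Sum>t = 1..n. F p s * F n t * ((s + t - j - 1) choose (s - j))) = F p s * (\<Sum>t = 1..n. F n t * ((s + t - j - 1) choose (s - j)))"
        by (simp add: sum_distrib_left mult.assoc)
      also have "\<dots> = g (p - s)" unfolding e g_def using s j1 n1
        by (subst Fp) (auto simp: L_def mpn intro!: arg_cong2[where f="(choose)"])
      finally show ?thesis .
    qed
    have "(\<Sum>s = j..p. \<Sum>t = 1..n. F p s * F n t * ((s + t - j - 1) choose (s - j))) = (\<Sum>s = j..p. g (p - s))"
      by (rule sum.cong[OF refl]) (rule inner; simp)
    also have "\<dots> = sum g P1"
      by (rule sum.reindex_bij_witness[where i="\<lambda>i. p - i" and j="\<lambda>s. p - s"])
        (use jm j1 in \<open>auto simp: P1_def L_def mpn\<close>)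
    finally show ?thesis by (simp add: n_def)
  qed
  have C: "(\<Sum>s = 1..p. \<Sum>t = j..q - 1. F p s * F (q - 1) t * ((s + t - j - 1) choose (s - 1))) = sum g P3"
  proof -
    have inner: "(\<Sum>s = 1..p. F p s * F n t * ((s + t - j - 1) choose (s - 1))) = g (t + p - j)"
      if t: "j \<le> t" "t \<le> n" for t
    proof -
      have "(\<Sum>s = 1..p. F p s * ((s + t - j - 1) choose (s - 1)))
          = (\<Sum>i\<le>p-1. ((t-j+i) choose (t-j)) * ((p-1+(p-1-i)) choose (p-1)))"
      proof -
        have "(\<Sum>s = 1..p. F p s * ((s + t - j - 1) choose (s - 1)))
            = (\<Sum>i\<le>p-1. F p (Suc i) * ((Suc i + t - j - 1) choose (Suc i - 1)))"
          by (rule shift1[OF assms(1)])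
        also have "\<dots> = (\<Sum>i\<le>p-1. ((t-j+i) choose (t-j)) * ((p-1+(p-1-i)) choose (p-1)))"
        proof (rule sum.cong[OF refl])
          fix i assume i: "i \<in> {..p-1}"
          have "F p (Suc i) = (p-1+(p-1-i)) choose (p-1)" using i assms(1) by (subst Fp) auto
          moreover have "Suc i + t - j - 1 = t-j+i" using t by simp
          moreover have "(t-j+i) choose i = (t-j+i) choose (t-j)" by (rule chsym)
          ultimately show "F p (Suc i) * ((Suc i + t - j - 1) choose (Suc i - 1)) = ((t-j+i) choose (t-j)) * ((p-1+(p-1-i)) choose (p-1))"
            by simp
        qed
        finally show ?thesis .
      qed
      also have "\<dots> = (t-j+(p-1)+(p-1)+1) choose (p-1)" by (rule V')
      finally have e: "(\<Sum>s = 1..p. F p s * ((s + t - j - 1) choose (s - 1))) = (t-j+(p-1)+(p-1)+1) choose (p-1)" .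
      have "(\<Sum>s = 1..p. F p s * F n t * ((s + t - j - 1) choose (s - 1))) = F n t * (\<Sum>s = 1..p. F p s * ((s + t - j - 1) choose (s - 1)))"
        by (simp add: sum_distrib_left algebra_simps)
      also have "\<dots> = g (t + p - j)" unfolding e g_def using t j1 n1 assms(1)
        by (subst Fn) (auto simp: L_def mpn intro!: arg_cong2[where f="(choose)"])
      finally show ?thesis .
    qed
    have "(\<Sum>s = 1..p. \<Sum>t = j..n. F p s * F n t * ((s + t - j - 1) choose (s - 1)))
        = (\<Sum>t = j..n. \<Sum>s = 1..p. F p s * F n t * ((s + t - j - 1) choose (s - 1)))"
      by (rule sum.swap)
    also have "\<dots> = (\<Sum>t = j..n. g (t + p - j))"
      by (rule sum.cong[OF refl]) (rule inner; simp)
    also have "\<dots> = sum g P3"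
      by (rule sum.reindex_bij_witness[where i="\<lambda>i. i + j - p" and j="\<lambda>t. t + p - j"])
        (use jm j1 in \<open>auto simp: P3_def L_def mpn\<close>)
    finally show ?thesis by (simp add: n_def)
  qed
  have A: "(\<Sum>(s, t) \<in> {(s, t). s \<in> {1..p} \<and> t \<in> {1..q - 1} \<and> s + t = j}. F p s * F (q - 1) t) = sum g P2"
  proof -
    have "(\<Sum>(s, t) \<in> {(s, t). s \<in> {1..p} \<and> t \<in> {1..n} \<and> s + t = j}. F p s * F n t) = sum g P2"
    proof (rule sum.reindex_bij_witness[where i="\<lambda>i. (p - i, j - (p - i))" and j="\<lambda>(s,t). p - s"])
      fix a assume "a \<in> {(s, t). s \<in> {1..p} \<and> t \<in> {1..n} \<and> s + t = j}"
      then obtain s t where a: "a = (s,t)" "1 \<le> s" "s \<le> p" "1 \<le> t" "t \<le> n" "s + t = j" by auto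
      show "(p - (case a of (s, t) \<Rightarrow> p - s), j - (p - (case a of (s, t) \<Rightarrow> p - s))) = a"
        using a by auto
      show "(case a of (s, t) \<Rightarrow> p - s) \<in> P2" using a jm j1 by (auto simp: P2_def L_def mpn)
      show "g (case a of (s, t) \<Rightarrow> p - s) = (case a of (s, t) \<Rightarrow> F p s * F n t)"
        using a unfolding g_def by (auto simp: Fp Fn L_def mpn intro!: arg_cong2[where f="(choose)"])
    next
      fix b assume "b \<in> P2"
      then show "(case (p - b, j - (p - b)) of (s, t) \<Rightarrow> p - s) = b"
        and "(p - b, j - (p - b)) \<in> {(s, t). s \<in> {1..p} \<and> t \<in> {1..n} \<and> s + t = j}"
        using jm j1 by (auto simp: P2_def L_def mpn)
    qed
    then show ?thesis by (simp add: n_def)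
  qed
  show ?thesis using LHS split A B C by simp
qed
end
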